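(* Let $\mathcal{F}=(W,\preceq,\mathcal{V})$ be a finite poset model and $w_1,w_2\in W$. If $w_1\approx_\pm w_2$ then $w_1\equiv_\eta w_2$.
   Context: Fix a set PL of proposition letters. A poset model is $\mathcal{F}=(W,\preceq,\mathcal{V})$ with $(W,\preceq)$ a partial order and $\mathcal{V}:\mathrm{PL}\to\mathcal{P}(W)$. $[m;n]=\{i\in\mathbb{N}:m\le i\le n\}$, $[m;n)=\{i:m\le i<n\}$. An undirected path of length $\ell$ from $w$ is $\pi:[0;\ell]\to W$ with $\pi(0)=w$ and, for each $i\in[0;\ell)$, $\pi(i)\preceq\pi(i+1)$ or $\pi(i+1)\preceq\pi(i)$. A $\downarrow$-path is an undirected path of length $\ell\ge1$ with $\pi(\ell)\preceq\pi(\ell-1)$. A $\pm$-path is a $\downarrow$-path of length $\ell\ge2$ with $\pi(0)\preceq\pi(1)$. SLCS$_\eta$ formulas: $\Phi::=p\mid\neg\Phi\mid\Phi_1\wedge\Phi_2\mid\eta(\Phi_1,\Phi_2)$; $w\models p$ iff $w\in\mathcal{V}(p)$; negation, conjunction standard; $w\models\eta(\Phi_1,\Phi_2)$ iff some $\pm$-path $\pi:[0;\ell]\to W$ from $w$ has $\pi(\ell)\models\Phi_2$ and $\pi(i)\models\Phi_1$ for all $i\in[0;\ell)$. $w_1\equiv_\eta w_2$ means $w_1,w_2$ satisfy the same SLCS$_\eta$ formulas. A weak $\pm$-bisimulation is a symmetric relation $B\subseteq W\times W$ such that whenever $B(w_1,w_2)$: (1) for every $p$, $w_1\in\mathcal{V}(p)$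 iff $w_2\in\mathcal{V}(p)$; (2) for all $u_1,d_1\in W$ with ($w_1\preceq u_1$ or $u_1\preceq w_1$) and $d_1\preceq u_1$, there is a $\pm$-path $\pi_2:[0;\ell_2]\to W$ from $w_2$ with $B(d_1,\pi_2(\ell_2))$ and, for all $j\in[0;\ell_2)$, $B(w_1,\pi_2(j))$ or $B(u_1,\pi_2(j))$. $w_1\approx_\pm w_2$ iff some weak $\pm$-bisimulation contains $(w_1,w_2)$. *)

theory Defs
  imports Main
begin

definition poset_model :: "'w set \<Rightarrow> ('w \<Rightarrow> 'w \<Rightarrow> bool) \<Rightarrow> ('p \<Rightarrow> 'w set) \<Rightarrow> bool" where
  "poset_model W le V \<longleftrightarrow>
     (\<forall>x\<in>W. le x x) \<and>
     (\<forall>x\<in>W. \<forall>y\<in>W. \<forall>z\<in>W. le x y \<longrightarrow> le y z \<longrightarrow> le x z) \<and>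
     (\<forall>x\<in>W. \<forall>y\<in>W. le x y \<longrightarrow> le y x \<longrightarrow> x = y) \<and>
     (\<forall>p. V p \<subseteq> W)"

definition undir_path :: "'w set \<Rightarrow> ('w \<Rightarrow> 'w \<Rightarrow> bool) \<Rightarrow> 'w \<Rightarrow> (nat \<Rightarrow> 'w) \<Rightarrow> nat \<Rightarrow> bool" where
  "undir_path W le w \<pi> l \<longleftrightarrow>
     (\<forall>i\<le>l. \<pi> i \<in> W) \<and> \<pi> 0 = w \<and>
     (\<forall>i<l. le (\<pi> i) (\<pi> (Suc i)) \<or> le (\<pi> (Suc i)) (\<pi> i))"

definition down_path :: "'w set \<Rightarrow> ('w \<Rightarrow> 'w \<Rightarrow> bool) \<Rightarrow> 'w \<Rightarrow> (nat \<Rightarrow> 'w) \<Rightarrow> nat \<Rightarrow> bool" where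
  "down_path W le w \<pi> l \<longleftrightarrow>
     undir_path W le w \<pi> l \<and> l \<ge> 1 \<and> le (\<pi> l) (\<pi> (l - 1))"

definition pm_path :: "'w set \<Rightarrow> ('w \<Rightarrow> 'w \<Rightarrow> bool) \<Rightarrow> 'w \<Rightarrow> (nat \<Rightarrow> 'w) \<Rightarrow> nat \<Rightarrow> bool" where
  "pm_path W le w \<pi> l \<longleftrightarrow>
     down_path W le w \<pi> l \<and> l \<ge> 2 \<and> le (\<pi> 0) (\<pi> 1)"

datatype 'p slcs = Prop 'p | Neg "'p slcs" | Conj "'p slcs" "'p slcs" | Eta "'p slcs" "'p slcs"

fun sat :: "'w set \<Rightarrow> ('w \<Rightarrow> 'w \<Rightarrow> bool) \<Rightarrow> ('p \<Rightarrow> 'w set) \<Rightarrow> 'w \<Rightarrow> 'p slcs \<Rightarrow> bool" where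
  "sat W le V w (Prop p) \<longleftrightarrow> w \<in> V p"
| "sat W le V w (Neg \<phi>) \<longleftrightarrow> \<not> sat W le V w \<phi>"
| "sat W le V w (Conj \<phi> \<psi>) \<longleftrightarrow> sat W le V w \<phi> \<and> sat W le V w \<psi>"
| "sat W le V w (Eta \<phi> \<psi>) \<longleftrightarrow>
     (\<exists>\<pi> l. pm_path W le w \<pi> l \<and> sat W le V (\<pi> l) \<psi> \<and>
            (\<forall>i<l. sat W le V (\<pi> i) \<phi>))"

definition eta_equiv :: "'w set \<Rightarrow> ('w \<Rightarrow> 'w \<Rightarrow> bool) \<Rightarrow> ('p \<Rightarrow> 'w set) \<Rightarrow> 'w \<Rightarrow> 'w \<Rightarrow> bool" where
  "eta_equiv W le V w1 w2 \<longleftrightarrow> (\<forall>\<phi>. sat W le V w1 \<phi> = sat W le V w2 \<phi>)"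

definition weak_pm_bisim :: "'w set \<Rightarrow> ('w \<Rightarrow> 'w \<Rightarrow> bool) \<Rightarrow> ('p \<Rightarrow> 'w set) \<Rightarrow> ('w \<Rightarrow> 'w \<Rightarrow> bool) \<Rightarrow> bool" where
  "weak_pm_bisim W le V B \<longleftrightarrow>
     (\<forall>x y. B x y \<longrightarrow> x \<in> W \<and> y \<in> W) \<and>
     (\<forall>x y. B x y \<longrightarrow> B y x) \<and>
     (\<forall>w1 w2. B w1 w2 \<longrightarrow>
        (\<forall>p. w1 \<in> V p \<longleftrightarrow> w2 \<in> V p) \<and>
        (\<forall>u1\<in>W. \<forall>d1\<in>W. (le w1 u1 \<or> le u1 w1) \<longrightarrow> le d1 u1 \<longrightarrow>
           (\<exists>\<pi>2 l2. pm_path W le w2 \<pi>2 l2 \<and> B d1 (\<pi>2 l2) \<and>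
              (\<forall>j<l2. B w1 (\<pi>2 j) \<or> B u1 (\<pi>2 j)))))"

definition weak_pm_bisimilar :: "'w set \<Rightarrow> ('w \<Rightarrow> 'w \<Rightarrow> bool) \<Rightarrow> ('p \<Rightarrow> 'w set) \<Rightarrow> 'w \<Rightarrow> 'w \<Rightarrow> bool" where
  "weak_pm_bisimilar W le V w1 w2 \<longleftrightarrow> (\<exists>B. weak_pm_bisim W le V B \<and> B w1 w2)"

end

theory Submission
  imports Defs
begin

lemma concat_pm:
  assumes "pm_path W le y r1 l1" "pm_path W le (r1 l1) r2 l2"
  shows "pm_path W le y (\<lambda>i. if i \<le> l1 then r1 i else r2 (i - l1)) (l1 + l2)"
proof -
  let ?r = "\<lambda>i. if i \<le> l1 then r1 i else r2 (i - l1)"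
  have u1: "\<forall>i\<le>l1. r1 i \<in> W" "r1 0 = y" "\<forall>i<l1. le (r1 i) (r1 (Suc i)) \<or> le (r1 (Suc i)) (r1 i)"
    "l1 \<ge> 2" "le (r1 0) (r1 1)"
    using assms(1) unfolding pm_path_def down_path_def undir_path_def by auto
  have u2: "\<forall>i\<le>l2. r2 i \<in> W" "r2 0 = r1 l1" "\<forall>i<l2. le (r2 i) (r2 (Suc i)) \<or> le (r2 (Suc i)) (r2 i)"
    "l2 \<ge> 2" "le (r2 l2) (r2 (l2 - 1))"
    using assms(2) unfolding pm_path_def down_path_def undir_path_def by auto
  have A: "\<forall>i\<le>l1+l2. ?r i \<in> W"
  proof (intro allI impI)
    fix i assume "i \<le> l1 + l2"
    then show "?r i \<in> W" using u1(1) u2(1) by auto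
  qed
  have B: "\<forall>i<l1+l2. le (?r i) (?r (Suc i)) \<or> le (?r (Suc i)) (?r i)"
  proof (intro allI impI)
    fix i assume i: "i < l1 + l2"
    show "le (?r i) (?r (Suc i)) \<or> le (?r (Suc i)) (?r i)"
    proof (cases "i < l1")
      case True
      then show ?thesis using u1(3) by auto
    next
      case False
      then have e: "?r i = r2 (i - l1)" using u2(2) by (cases "i = l1") auto
      have e2: "?r (Suc i) = r2 (Suc (i - l1))" using False by (simp add: Suc_diff_le)
      have "i - l1 < l2" using i False by auto
      then show ?thesis using u2(3) e e2 by auto
    qed
  qed
  have C: "le (?r (l1+l2)) (?r (l1 + l2 - 1))"
  proof -
    have "?r (l1+l2) = r2 l2" using u2(4) by auto
    moreover have "?r (l1 + l2 - 1) = r2 (l2 - 1)"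
    proof (cases "l1 + l2 - 1 \<le> l1")
      case True then show ?thesis using u2(4) by auto
    next
      case False then show ?thesis by auto
    qed
    ultimately show ?thesis using u2(5) by simp
  qed
  have D: "le (?r 0) (?r 1)" using u1 by auto
  show ?thesis unfolding pm_path_def down_path_def undir_path_def
    using A B C D u1 u2 by auto
qed

lemma down_transfer:
  assumes bis: "weak_pm_bisim W le V B" and pm: "poset_model W le V"
    and IH1: "\<forall>a b. B a b \<longrightarrow> (sat W le V a f1 \<longleftrightarrow> sat W le V b f1)"
    and IH2: "\<forall>a b. B a b \<longrightarrow> (sat W le V a f2 \<longleftrightarrow> sat W le V b f2)"
  shows "undir_path W le x \<pi> l \<Longrightarrow> l \<ge> 1 \<Longrightarrow> le (\<pi> l) (\<pi> (l - 1)) \<Longrightarrow>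
     (\<forall>i<l. sat W le V (\<pi> i) f1) \<Longrightarrow> sat W le V (\<pi> l) f2 \<Longrightarrow> B x y \<Longrightarrow>
     \<exists>\<rho> m. pm_path W le y \<rho> m \<and> sat W le V (\<rho> m) f2 \<and> (\<forall>i<m. sat W le V (\<rho> i) f1)"
proof (induction l arbitrary: x \<pi> y rule: less_induct)
  case (less l)
  have refl: "\<And>z. z \<in> W \<Longrightarrow> le z z" using pm unfolding poset_model_def by auto
  have up: "\<forall>i\<le>l. \<pi> i \<in> W" "\<pi> 0 = x" "\<forall>i<l. le (\<pi> i) (\<pi> (Suc i)) \<or> le (\<pi> (Suc i)) (\<pi> i)"
    using less.prems(1) unfolding undir_path_def by auto
  have xW: "x \<in> W" using up by auto
  have p1W: "\<pi> 1 \<in> W" using up less.prems(2) by auto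
  have step: "\<And>w1 w2 u1 d1. B w1 w2 \<Longrightarrow> u1 \<in> W \<Longrightarrow> d1 \<in> W \<Longrightarrow> (le w1 u1 \<or> le u1 w1) \<Longrightarrow> le d1 u1 \<Longrightarrow>
     (\<exists>\<pi>2 l2. pm_path W le w2 \<pi>2 l2 \<and> B d1 (\<pi>2 l2) \<and> (\<forall>j<l2. B w1 (\<pi>2 j) \<or> B u1 (\<pi>2 j)))"
    using bis unfolding weak_pm_bisim_def by blast
  have sx: "sat W le V x f1" using less.prems(2,4) up(2) by force
  have s1: "l \<ge> 2 \<Longrightarrow> sat W le V (\<pi> 1) f1" using less.prems(4) by auto
  show ?case
  proof (cases "l = 1")
    case True
    have "le (\<pi> 1) x" using less.prems(3) True up(2) by simp
    then obtain \<rho> m where r: "pm_path W le y \<rho> m" "B (\<pi> 1) (\<rho> m)" "\<forall>j<m. B x (\<rho> j) \<or> B x (\<rho> j)"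
      using step[OF less.prems(6) xW p1W] refl[OF xW] by blast
    have "sat W le V (\<rho> m) f2" using IH2 r(2) less.prems(5) True by auto
    moreover have "\<forall>i<m. sat W le V (\<rho> i) f1" using r(3) IH1 sx by blast
    ultimately show ?thesis using r(1) by blast
  next
    case False
    then have l2: "l \<ge> 2" using less.prems(2) by auto
    have "le x (\<pi> 1) \<or> le (\<pi> 1) x" using up(2,3) l2 by (metis One_nat_def less_le_trans numeral_2_eq_2 lessI zero_less_Suc)
    then obtain \<rho> m where r: "pm_path W le y \<rho> m" "B (\<pi> 1) (\<rho> m)" "\<forall>j<m. B x (\<rho> j) \<or> B (\<pi> 1) (\<rho> j)"
    proof
      assume "le x (\<pi> 1)"
      then show ?thesis using step[OF less.prems(6) p1W p1W] refl[OF p1W] that by blast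
    next
      assume "le (\<pi> 1) x"
      then obtain \<rho> m where r: "pm_path W le y \<rho> m" "B (\<pi> 1) (\<rho> m)" "\<forall>j<m. B x (\<rho> j) \<or> B x (\<rho> j)"
        using step[OF less.prems(6) xW p1W] refl[OF xW] by blast
      then show ?thesis using that by blast
    qed
    have rs: "\<forall>i<m. sat W le V (\<rho> i) f1" using r(3) IH1 sx s1[OF l2] by blast
    let ?\<pi> = "\<lambda>i. \<pi> (Suc i)"
    have u': "undir_path W le (\<pi> 1) ?\<pi> (l - 1)"
      unfolding undir_path_def using up l2 by (auto simp: Suc_le_eq le_diff_conv2)
    have le': "le (?\<pi> (l - 1)) (?\<pi> (l - 1 - 1))"
    proof -
      have "Suc (l - 1) = l" "Suc (l - 1 - 1) = l - 1" using l2 by auto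
      then show ?thesis using less.prems(3) by simp
    qed
    have s': "\<forall>i<l-1. sat W le V (?\<pi> i) f1" using less.prems(4) by auto
    have s2': "sat W le V (?\<pi> (l - 1)) f2" using less.prems(5) l2 by (simp add: Suc_diff_1)
    obtain \<sigma> n where sg: "pm_path W le (\<rho> m) \<sigma> n" "sat W le V (\<sigma> n) f2" "\<forall>i<n. sat W le V (\<sigma> i) f1"
      using less.IH[of "l - 1" "\<pi> 1" ?\<pi> "\<rho> m", OF _ u' _ le' s' s2' r(2)] l2 by fastforce
    have n2: "n \<ge> 2" using sg(1) unfolding pm_path_def by auto
    have s0: "\<sigma> 0 = \<rho> m" using sg(1) unfolding pm_path_def down_path_def undir_path_def by auto
    let ?c = "\<lambda>i. if i \<le> m then \<rho> i else \<sigma> (i - m)"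
    have "pm_path W le y ?c (m + n)" using concat_pm[OF r(1)] sg(1) by blast
    moreover have "sat W le V (?c (m + n)) f2" using sg(2) n2 by auto
    moreover have "\<forall>i<m+n. sat W le V (?c i) f1"
    proof (intro allI impI)
      fix i assume i: "i < m + n"
      show "sat W le V (?c i) f1"
      proof (cases "i < m")
        case True then show ?thesis using rs by auto
      next
        case False
        then have "?c i = \<sigma> (i - m)" using s0 by (cases "i = m") auto
        moreover have "i - m < n" using i False by auto
        ultimately show ?thesis using sg(3) by auto
      qed
    qed
    ultimately show ?thesis by blast
  qed
qed

lemma bisim_sat:
  assumes bis: "weak_pm_bisim W le V B" and pm: "poset_model W le V"
  shows "\<forall>a b. B a b \<longrightarrow> (sat W le V a f \<longleftrightarrow> sat W le V b f)"
proof (induction f)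
  case (Prop p)
  then show ?case using bis unfolding weak_pm_bisim_def by auto
next
  case (Neg f)
  then show ?case by auto
next
  case (Conj f1 f2)
  then show ?case by auto
next
  case (Eta f1 f2)
  have dir: "\<And>a b. B a b \<Longrightarrow> sat W le V a (Eta f1 f2) \<Longrightarrow> sat W le V b (Eta f1 f2)"
  proof -
    fix a b assume ab: "B a b" and s: "sat W le V a (Eta f1 f2)"
    then obtain \<pi> l where p: "pm_path W le a \<pi> l" "sat W le V (\<pi> l) f2" "\<forall>i<l. sat W le V (\<pi> i) f1"
      by auto
    have "undir_path W le a \<pi> l" "l \<ge> 1" "le (\<pi> l) (\<pi> (l - 1))"
      using p(1) unfolding pm_path_def down_path_def by auto
    from down_transfer[OF bis pm Eta.IH this p(3) p(2) ab]
    show "sat W le V b (Eta f1 f2)" by auto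
  qed
  have sym: "\<And>a b. B a b \<Longrightarrow> B b a" using bis unfolding weak_pm_bisim_def by blast
  show ?case using dir sym by blast
qed

theorem lemma12:
  fixes W :: "'w set" and le :: "'w \<Rightarrow> 'w \<Rightarrow> bool" and V :: "'p \<Rightarrow> 'w set"
  assumes "poset_model W le V" and "finite W"
    and "w1 \<in> W" and "w2 \<in> W"
    and "weak_pm_bisimilar W le V w1 w2"
  shows "eta_equiv W le V w1 w2"
proof -
  obtain B where "weak_pm_bisim W le V B" "B w1 w2"
    using assms(5) unfolding weak_pm_bisimilar_def by blast
  then show ?thesis unfolding eta_equiv_def using bisim_sat[OF _ assms(1)] by blast
qed

end
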